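(* Let $A\in B_\infty(L)$, let $\{e_j\}_{j\in\mathbb N}$ be a complete orthonormal system in $L$, and $\Delta_M(A):=\sum_{j=1}^M a(Ae_j)a(\bar e_j)$. Then for every $\Phi\in\mathcal F_0$ the limit $\Delta(A)\Phi:=\lim_{M\to\infty}\Delta_M(A)\Phi$ exists, and for $n\in\mathbb N_0$, $g_1,\dots,g_n\in L$, \[ \Delta(A)\,a^\dagger(g_n)\cdots a^\dagger(g_1)\Omega=\sum_{\substack{k,l=1\\k\neq l}}^n(\bar g_l,Ag_k)\Big(\prod_{m\in\{1,\dots,n\}\setminus\{k,l\}}a^\dagger(g_m)\Big)\Omega , \] where the product is over the creation operators $a^\dagger(g_m)$, $m\ne k,l$ (which commute, so the order is irrelevant), and the sum is zero for $n<2$.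
   Context: $L$ is a separable complex Hilbert space with $\dim L=\infty$, scalar product antilinear in the first argument, and a conjugation $f\mapsto\bar f$ (antilinear involution with $(\bar f,\bar g)=(g,f)$). $B_\infty(L)$ denotes the bounded operators on $L$. $\mathcal F$ carries a Fock representation of the CCR over $L$: on a dense invariant domain $D$ there are operators $a(f),a^\dagger(f)$, linear in $f$, with $[a(f),a(g)]=0=[a^\dagger(f),a^\dagger(g)]$, $[a(f),a^\dagger(g)]=(\bar f,g)\mathrm{id}$, $(a(f)\Phi,\Psi)=(\Phi,a^\dagger(\bar f)\Psi)$, a unit vacuum $\Omega$ with $a(f)\Omega=0$, and $\mathcal F$ is the closure of $\mathcal F_0:=\operatorname{span}\{a^\dagger(f_n)\cdots a^\dagger(f_1)\Omega: n\in\mathbb N_0, f_i\in L\}$. *)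

theory Defs
  imports "HOL-Analysis.Analysis"
begin

text \<open>Complex vector spaces and complex inner product (Hilbert) spaces, given by explicit
  scalar multiplication sm and scalar product ip (antilinear in the first argument)
  on a carrier type of class ab_group_add.\<close>

definition cvs :: "(complex \<Rightarrow> 'v::ab_group_add \<Rightarrow> 'v) \<Rightarrow> bool" where
  "cvs sm \<longleftrightarrow> (\<forall>x. sm 1 x = x) \<and> (\<forall>a b x. sm (a * b) x = sm a (sm b x))
     \<and> (\<forall>a b x. sm (a + b) x = sm a x + sm b x) \<and> (\<forall>a x y. sm a (x + y) = sm a x + sm a y)"

definition cinner_space :: "(complex \<Rightarrow> 'v::ab_group_add \<Rightarrow> 'v) \<Rightarrow> ('v \<Rightarrow> 'v \<Rightarrow> complex) \<Rightarrow> bool" where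
  "cinner_space sm ip \<longleftrightarrow> cvs sm
     \<and> (\<forall>x y z. ip x (y + z) = ip x y + ip x z)
     \<and> (\<forall>x c y. ip x (sm c y) = c * ip x y)
     \<and> (\<forall>x y. ip y x = cnj (ip x y))
     \<and> (\<forall>x. 0 \<le> Re (ip x x))
     \<and> (\<forall>x. ip x x = 0 \<longrightarrow> x = 0)"

definition nrm :: "('v \<Rightarrow> 'v \<Rightarrow> complex) \<Rightarrow> 'v \<Rightarrow> real" where
  "nrm ip x = sqrt (Re (ip x x))"

definition conv_to :: "('v::ab_group_add \<Rightarrow> 'v \<Rightarrow> complex) \<Rightarrow> (nat \<Rightarrow> 'v) \<Rightarrow> 'v \<Rightarrow> bool" where
  "conv_to ip X y \<longleftrightarrow> ((\<lambda>M. nrm ip (X M - y)) \<longlonglongrightarrow> 0)"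

definition chilbert :: "(complex \<Rightarrow> 'v::ab_group_add \<Rightarrow> 'v) \<Rightarrow> ('v \<Rightarrow> 'v \<Rightarrow> complex) \<Rightarrow> bool" where
  "chilbert sm ip \<longleftrightarrow> cinner_space sm ip
     \<and> (\<forall>X. (\<forall>e>0. \<exists>N. \<forall>m\<ge>N. \<forall>n\<ge>N. nrm ip (X m - X n) < e) \<longrightarrow> (\<exists>y. conv_to ip X y))"

definition cspan :: "(complex \<Rightarrow> 'v::ab_group_add \<Rightarrow> 'v) \<Rightarrow> 'v set \<Rightarrow> 'v set" where
  "cspan sm S = {(\<Sum>x\<in>T. sm (c x) x) | T c. finite T \<and> T \<subseteq> S}"

definition ncl :: "('v::ab_group_add \<Rightarrow> 'v \<Rightarrow> complex) \<Rightarrow> 'v set \<Rightarrow> 'v set" where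
  "ncl ip S = {x. \<forall>e>0. \<exists>y\<in>S. nrm ip (x - y) < e}"

definition conjugation :: "(complex \<Rightarrow> 'l::ab_group_add \<Rightarrow> 'l) \<Rightarrow> ('l \<Rightarrow> 'l \<Rightarrow> complex) \<Rightarrow> ('l \<Rightarrow> 'l) \<Rightarrow> bool" where
  "conjugation sm ip cj \<longleftrightarrow> (\<forall>x y. cj (x + y) = cj x + cj y) \<and> (\<forall>c x. cj (sm c x) = sm (cnj c) (cj x))
     \<and> (\<forall>x. cj (cj x) = x) \<and> (\<forall>f g. ip (cj f) (cj g) = ip g f)"

definition bounded_op :: "(complex \<Rightarrow> 'l::ab_group_add \<Rightarrow> 'l) \<Rightarrow> ('l \<Rightarrow> 'l \<Rightarrow> complex) \<Rightarrow> ('l \<Rightarrow> 'l) \<Rightarrow> bool" where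
  "bounded_op sm ip A \<longleftrightarrow> (\<forall>x y. A (x + y) = A x + A y) \<and> (\<forall>c x. A (sm c x) = sm c (A x))
     \<and> (\<exists>C. \<forall>x. nrm ip (A x) \<le> C * nrm ip x)"

definition complete_ons :: "(complex \<Rightarrow> 'l::ab_group_add \<Rightarrow> 'l) \<Rightarrow> ('l \<Rightarrow> 'l \<Rightarrow> complex) \<Rightarrow> (nat \<Rightarrow> 'l) \<Rightarrow> bool" where
  "complete_ons sm ip e \<longleftrightarrow> (\<forall>j\<ge>1. \<forall>k\<ge>1. ip (e j) (e k) = (if j = k then 1 else 0))
     \<and> ncl ip (cspan sm (e ` {1..})) = UNIV"

text \<open>The creation word  a^dagger(g_{m_r}) ... a^dagger(g_{m_1}) Psi  over a finite index set
  I = {m_1 < ... < m_r} (largest index applied last, i.e. leftmost).\<close>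
definition creat :: "('l \<Rightarrow> 'f \<Rightarrow> 'f) \<Rightarrow> (nat \<Rightarrow> 'l) \<Rightarrow> nat set \<Rightarrow> 'f \<Rightarrow> 'f" where
  "creat ad g I \<Psi> = foldr (\<lambda>m \<Phi>. ad (g m) \<Phi>) (rev (sorted_list_of_set I)) \<Psi>"

definition F0 :: "(complex \<Rightarrow> 'f::ab_group_add \<Rightarrow> 'f) \<Rightarrow> ('l \<Rightarrow> 'f \<Rightarrow> 'f) \<Rightarrow> 'f \<Rightarrow> 'f set" where
  "F0 smF ad \<Omega> = cspan smF {creat ad f {1..n} \<Omega> | n f. True}"

definition fock_rep ::
  "(complex \<Rightarrow> 'l::ab_group_add \<Rightarrow> 'l) \<Rightarrow> ('l \<Rightarrow> 'l \<Rightarrow> complex) \<Rightarrow> ('l \<Rightarrow> 'l) \<Rightarrow>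
   (complex \<Rightarrow> 'f::ab_group_add \<Rightarrow> 'f) \<Rightarrow> ('f \<Rightarrow> 'f \<Rightarrow> complex) \<Rightarrow>
   'f set \<Rightarrow> ('l \<Rightarrow> 'f \<Rightarrow> 'f) \<Rightarrow> ('l \<Rightarrow> 'f \<Rightarrow> 'f) \<Rightarrow> 'f \<Rightarrow> bool" where
  "fock_rep smL ipL cj smF ipF D a ad \<Omega> \<longleftrightarrow>
     chilbert smF ipF
     \<and> cspan smF D = D \<and> ncl ipF D = UNIV
     \<and> (\<forall>f. \<forall>\<Phi>\<in>D. a f \<Phi> \<in> D \<and> ad f \<Phi> \<in> D)
     \<and> (\<forall>f. \<forall>\<Phi>\<in>D. \<forall>\<Psi>\<in>D. a f (\<Phi> + \<Psi>) = a f \<Phi> + a f \<Psi> \<and> ad f (\<Phi> + \<Psi>) = ad f \<Phi> + ad f \<Psi>)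
     \<and> (\<forall>f c. \<forall>\<Phi>\<in>D. a f (smF c \<Phi>) = smF c (a f \<Phi>) \<and> ad f (smF c \<Phi>) = smF c (ad f \<Phi>))
     \<and> (\<forall>f g. \<forall>\<Phi>\<in>D. a (f + g) \<Phi> = a f \<Phi> + a g \<Phi> \<and> ad (f + g) \<Phi> = ad f \<Phi> + ad g \<Phi>)
     \<and> (\<forall>f c. \<forall>\<Phi>\<in>D. a (smL c f) \<Phi> = smF c (a f \<Phi>) \<and> ad (smL c f) \<Phi> = smF c (ad f \<Phi>))
     \<and> (\<forall>f g. \<forall>\<Phi>\<in>D. a f (a g \<Phi>) = a g (a f \<Phi>))
     \<and> (\<forall>f g. \<forall>\<Phi>\<in>D. ad f (ad g \<Phi>) = ad g (ad f \<Phi>))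
     \<and> (\<forall>f g. \<forall>\<Phi>\<in>D. a f (ad g \<Phi>) - ad g (a f \<Phi>) = smF (ipL (cj f) g) \<Phi>)
     \<and> (\<forall>f. \<forall>\<Phi>\<in>D. \<forall>\<Psi>\<in>D. ipF (a f \<Phi>) \<Psi> = ipF \<Phi> (ad (cj f) \<Psi>))
     \<and> \<Omega> \<in> D \<and> ipF \<Omega> \<Omega> = 1 \<and> (\<forall>f. a f \<Omega> = 0)
     \<and> ncl ipF (F0 smF ad \<Omega>) = UNIV"

definition DeltaM :: "('l \<Rightarrow> 'l) \<Rightarrow> ('l \<Rightarrow> 'f \<Rightarrow> 'f) \<Rightarrow> ('l \<Rightarrow> 'l) \<Rightarrow> (nat \<Rightarrow> 'l) \<Rightarrow> nat \<Rightarrow> 'f \<Rightarrow> 'f::ab_group_add" where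
  "DeltaM cj a A e M \<Phi> = (\<Sum>j=1..M. a (A (e j)) (a (cj (e j)) \<Phi>))"

end

theory Submission
  imports Defs
begin

locale cip =
  fixes sm :: "complex \<Rightarrow> 'v::ab_group_add \<Rightarrow> 'v" and ip :: "'v \<Rightarrow> 'v \<Rightarrow> complex"
  assumes cis: "cinner_space sm ip"
begin

lemma cv: "cvs sm" using cis unfolding cinner_space_def by (elim conjE)
lemma cv1: "\<forall>x. sm 1 x = x" using cv unfolding cvs_def by (elim conjE)
lemma cv2: "\<forall>a b x. sm (a * b) x = sm a (sm b x)" using cv unfolding cvs_def by (elim conjE)
lemma cv3: "\<forall>a b x. sm (a + b) x = sm a x + sm b x" using cv unfolding cvs_def by (elim conjE)
lemma cv4: "\<forall>a x y. sm a (x + y) = sm a x + sm a y" using cv unfolding cvs_def by (elim conjE)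
lemma sm_one[simp]: "sm 1 x = x" using cv1 by (elim allE)
lemma sm_mult: "sm (a * b) x = sm a (sm b x)" using cv2 by (elim allE)
lemma sm_add_left: "sm (a + b) x = sm a x + sm b x" using cv3 by (elim allE)
lemma sm_add_right: "sm a (x + y) = sm a x + sm a y" using cv4 by (elim allE)
lemma sm_zero_left[simp]: "sm 0 x = 0"
proof -
  have "sm (0+0) x = sm 0 x + sm 0 x" by (rule sm_add_left)
  then show ?thesis by simp
qed
lemma sm_zero_right[simp]: "sm c 0 = 0"
proof -
  have "sm c (0+0) = sm c 0 + sm c 0" by (rule sm_add_right)
  then show ?thesis by simp
qed
lemma sm_minus_right: "sm c (- x) = - sm c x"
proof -
  have "sm c x + sm c (- x) = 0" using sm_add_right[of c x "- x"] by simp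
  then show ?thesis by (metis neg_eq_iff_add_eq_0 minus_minus)
qed
lemma sm_diff_right: "sm c (x - y) = sm c x - sm c y"
  using sm_add_right[of c x "-y"] sm_minus_right by simp
lemma sm_minus_left: "sm (- c) x = - sm c x"
proof -
  have "sm c x + sm (- c) x = 0" using sm_add_left[of c "- c" x] by simp
  then show ?thesis by (metis neg_eq_iff_add_eq_0 minus_minus)
qed
lemma sm_diff_left: "sm (c - d) x = sm c x - sm d x"
  using sm_add_left[of c "-d" x] sm_minus_left by simp
lemma sm_sum_right: "sm c (sum f S) = (\<Sum>i\<in>S. sm c (f i))"
  by (induction S rule: infinite_finite_induct) (auto simp: sm_add_right)
lemma sm_sum_left: "sm (sum f S) x = (\<Sum>i\<in>S. sm (f i) x)"
  by (induction S rule: infinite_finite_induct) (auto simp: sm_add_left)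

lemma ci1: "\<forall>x y z. ip x (y + z) = ip x y + ip x z" using cis unfolding cinner_space_def by (elim conjE)
lemma ci2: "\<forall>x c y. ip x (sm c y) = c * ip x y" using cis unfolding cinner_space_def by (elim conjE)
lemma ci3: "\<forall>x y. ip y x = cnj (ip x y)" using cis unfolding cinner_space_def by (elim conjE)
lemma ci4: "\<forall>x. 0 \<le> Re (ip x x)" using cis unfolding cinner_space_def by (elim conjE)
lemma ci5: "\<forall>x. ip x x = 0 \<longrightarrow> x = 0" using cis unfolding cinner_space_def by (elim conjE)
lemma ip_add_right: "ip x (y + z) = ip x y + ip x z" using ci1 by (elim allE)
lemma ip_sm_right: "ip x (sm c y) = c * ip x y" using ci2 by (elim allE)
lemma ip_sym: "ip y x = cnj (ip x y)" using ci3 by (elim allE)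
lemma ip_pos: "0 \<le> Re (ip x x)" using ci4 by (elim allE)
lemma ip_def0: "ip x x = 0 \<Longrightarrow> x = 0" using ci5 by blast
lemma ip_zero_right[simp]: "ip x 0 = 0" using ip_sm_right[of x 0 0] by simp
lemma ip_minus_right: "ip x (- y) = - ip x y"
proof -
  have "ip x y + ip x (- y) = 0" using ip_add_right[of x y "- y"] by simp
  then show ?thesis by (metis neg_eq_iff_add_eq_0 minus_minus)
qed
lemma ip_diff_right: "ip x (y - z) = ip x y - ip x z"
  using ip_add_right[of x y "-z"] ip_minus_right by simp
lemma ip_sum_right: "ip x (sum f S) = (\<Sum>i\<in>S. ip x (f i))"
  by (induction S rule: infinite_finite_induct) (auto simp: ip_add_right)
lemma ip_add_left: "ip (y + z) x = ip y x + ip z x"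
  by (metis complex_cnj_add ip_add_right ip_sym)
lemma ip_sm_left: "ip (sm c y) x = cnj c * ip y x"
  by (metis complex_cnj_mult ip_sm_right ip_sym)
lemma ip_zero_left[simp]: "ip 0 x = 0" by (metis complex_cnj_zero ip_sym ip_zero_right)
lemma ip_diff_left: "ip (y - z) x = ip y x - ip z x"
  by (metis complex_cnj_diff ip_diff_right ip_sym)
lemma ip_sum_left: "ip (sum f S) x = (\<Sum>i\<in>S. ip (f i) x)"
  by (induction S rule: infinite_finite_induct) (auto simp: ip_add_left)
lemma ip_self_real: "ip x x = complex_of_real (Re (ip x x))"
proof -
  have "cnj (ip x x) = ip x x" using ip_sym[of x x] by simp
  then have "Im (cnj (ip x x)) = Im (ip x x)" by simp
  then have "Im (ip x x) = 0" by simp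
  then show ?thesis by (simp add: complex_eq_iff)
qed
lemma nrm_sq: "(nrm ip x)^2 = Re (ip x x)"
  unfolding nrm_def using ip_pos[of x] by simp
lemma nrm_ge0: "0 \<le> nrm ip x" unfolding nrm_def using ip_pos[of x] by simp

lemma e1: "ip (x - sm t y) (x - sm t y) = ip x x - t * ip x y - cnj t * ip y x + cnj t * t * ip y y"
proof -
  have "ip (x - sm t y) (x - sm t y) = ip x x - cnj t * ip y x - t * (ip x y - cnj t * ip y y)"
    unfolding ip_diff_left ip_diff_right ip_sm_left ip_sm_right by (rule refl)
  then show ?thesis by (simp add: ring_distribs)
qed

lemma CS: "cmod (ip x y) \<le> nrm ip x * nrm ip y"
proof (cases "ip y y = 0")
  case True
  then have "y = 0" by (rule ip_def0)
  then show ?thesis by (simp add: nrm_ge0)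
next
  case False
  define r where "r = Re (ip y y)"
  have yy: "ip y y = complex_of_real r" unfolding r_def by (rule ip_self_real)
  have "r \<noteq> 0" using False yy by auto
  then have rpos: "r > 0" using ip_pos[of y] r_def by linarith
  define u where "u = ip x y"
  have yx: "ip y x = cnj u" unfolding u_def by (rule ip_sym)
  define t where "t = cnj u / complex_of_real r"
  have e2: "ip x x - t * u - cnj t * cnj u + cnj t * t * complex_of_real r = ip x x - u * cnj u / complex_of_real r"
  proof -
    have ct: "cnj t = u / complex_of_real r" unfolding t_def by simp
    show ?thesis unfolding ct unfolding t_def using rpos
      by (simp add: field_simps power2_eq_square)
  qed
  have e3: "u * cnj u = complex_of_real ((cmod u)^2)" by (rule complex_norm_square[symmetric])
  have "0 \<le> Re (ip (x - sm t y) (x - sm t y))" by (rule ip_pos)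
  also have "\<dots> = Re (ip x x - u * cnj u / complex_of_real r)"
    unfolding e1 yx yy u_def[symmetric] e2 by (rule refl)
  also have "\<dots> = Re (ip x x) - (cmod u)^2 / r" unfolding e3
    by simp
  finally have "(cmod u)^2 \<le> Re (ip x x) * r" using rpos by (simp add: field_simps)
  also have "\<dots> = (nrm ip x * nrm ip y)^2" by (simp add: power_mult_distrib nrm_sq r_def)
  finally show ?thesis unfolding u_def
    by (meson mult_nonneg_nonneg nrm_ge0 power2_le_imp_le)
qed

end

context cip begin

lemma pyth: assumes "ip u v = 0" shows "Re (ip (u + v) (u + v)) = Re (ip u u) + Re (ip v v)"
proof -
  have "ip v u = 0" using assms ip_sym[of v u] by simp
  then show ?thesis using assms by (simp add: ip_add_left ip_add_right)
qed

lemma ip_sum_sm_right: "ip x (\<Sum>j\<in>S. sm (c j) (f j)) = (\<Sum>j\<in>S. c j * ip x (f j))"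
  by (simp add: ip_sum_right ip_sm_right)

lemma ip_sum_sm_left: "ip (\<Sum>j\<in>S. sm (c j) (f j)) x = (\<Sum>j\<in>S. cnj (c j) * ip (f j) x)"
  by (simp add: ip_sum_left ip_sm_left)

lemma sum_sm_diff: "(\<Sum>j\<in>S. sm (c j) (f j)) - (\<Sum>j\<in>S. sm (d j) (f j)) = (\<Sum>j\<in>S. sm (c j - d j) (f j))"
  by (simp add: sum_subtractf[symmetric] sm_diff_left)

lemma proj_orth:
  fixes M :: nat
  assumes on: "\<forall>j\<in>{1..M}. \<forall>k\<in>{1..M}. ip (e j) (e k) = (if j = k then 1 else 0)"
  shows "ip (g - (\<Sum>j=1..M. sm (ip (e j) g) (e j))) (\<Sum>j=1..M. sm (c j) (e j)) = 0"
proof -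
  let ?P = "\<Sum>j=1..M. sm (ip (e j) g) (e j)"
  have z: "ip (e k) (g - ?P) = 0" if k: "k \<in> {1..M}" for k
  proof -
    have "ip (e k) ?P = (\<Sum>j=1..M. ip (e j) g * ip (e k) (e j))" by (rule ip_sum_sm_right)
    also have "\<dots> = (\<Sum>j\<in>{1..M}. if j = k then ip (e j) g else 0)"
      by (rule sum.cong) (use on k in auto)
    also have "\<dots> = ip (e k) g" using k by (subst sum.delta) auto
    finally show ?thesis by (simp add: ip_diff_right)
  qed
  have "ip (g - ?P) (\<Sum>j=1..M. sm (c j) (e j)) = (\<Sum>j=1..M. c j * ip (g - ?P) (e j))"
    by (rule ip_sum_sm_right)
  also have "\<dots> = 0"
  proof (rule sum.neutral, rule ballI)
    fix j assume j: "j \<in> {1..M}"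
    have "ip (g - ?P) (e j) = cnj (ip (e j) (g - ?P))" by (rule ip_sym)
    then show "c j * ip (g - ?P) (e j) = 0" using z[OF j] by simp
  qed
  finally show ?thesis .
qed

lemma nrm_mono_Re: "Re (ip u u) \<le> Re (ip v v) \<Longrightarrow> nrm ip u \<le> nrm ip v"
  unfolding nrm_def by simp

lemma best_approx:
  fixes M :: nat
  assumes on: "\<forall>j\<in>{1..M}. \<forall>k\<in>{1..M}. ip (e j) (e k) = (if j = k then 1 else 0)"
  shows "nrm ip (g - (\<Sum>j=1..M. sm (ip (e j) g) (e j))) \<le> nrm ip (g - (\<Sum>j=1..M. sm (c j) (e j)))"
proof -
  let ?P = "\<Sum>j=1..M. sm (ip (e j) g) (e j)"
  let ?y = "\<Sum>j=1..M. sm (c j) (e j)"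
  have d: "?P - ?y = (\<Sum>j=1..M. sm (ip (e j) g - c j) (e j))" by (rule sum_sm_diff)
  have o: "ip (g - ?P) (?P - ?y) = 0" unfolding d by (rule proj_orth[OF on])
  have "g - ?y = (g - ?P) + (?P - ?y)" by simp
  then have "Re (ip (g - ?y) (g - ?y)) = Re (ip (g - ?P) (g - ?P)) + Re (ip (?P - ?y) (?P - ?y))"
    using pyth[OF o] by simp
  then have "Re (ip (g - ?P) (g - ?P)) \<le> Re (ip (g - ?y) (g - ?y))" using ip_pos[of "?P - ?y"] by linarith
  then show ?thesis by (rule nrm_mono_Re)
qed

end

context cip begin

lemma span_repr:
  assumes "y \<in> cspan sm (e ` {(1::nat)..})"
  shows "\<exists>N d. \<forall>M\<ge>N. y = (\<Sum>j=1..M. sm (d j) (e j))"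
proof -
  obtain T c where y: "y = (\<Sum>x\<in>T. sm (c x) x)" and T: "finite T" "T \<subseteq> e ` {1..}"
    using assms unfolding cspan_def by blast
  define h where "h x = (SOME j. j \<ge> 1 \<and> e j = x)" for x
  have hx: "h x \<ge> 1 \<and> e (h x) = x" if "x \<in> T" for x
  proof -
    have "\<exists>j. j \<ge> 1 \<and> e j = x" using T(2) that by auto
    then show ?thesis unfolding h_def by (rule someI_ex)
  qed
  have inj: "inj_on h T" by (rule inj_onI) (metis hx)
  define J where "J = h ` T"
  have fJ: "finite J" unfolding J_def using T(1) by simp
  then obtain N where N: "\<forall>j\<in>J. j \<le> N" using finite_nat_iff_bounded_le by auto
  define d where "d j = (if j \<in> J then c (e j) else 0)" for j
  have "\<forall>M\<ge>N. y = (\<Sum>j=1..M. sm (d j) (e j))"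
  proof (intro allI impI)
    fix M assume "N \<le> M"
    then have JM: "J \<subseteq> {1..M}" using N hx unfolding J_def by force
    have "(\<Sum>j=1..M. sm (d j) (e j)) = (\<Sum>j\<in>J. sm (c (e j)) (e j))"
      by (rule sum.mono_neutral_cong_right) (use JM in \<open>auto simp: d_def\<close>)
    also have "\<dots> = (\<Sum>x\<in>T. sm (c (e (h x))) (e (h x)))"
      unfolding J_def by (subst sum.reindex[OF inj]) (simp add: comp_def)
    also have "\<dots> = y" unfolding y by (rule sum.cong) (auto simp: hx)
    finally show "y = (\<Sum>j=1..M. sm (d j) (e j))" by simp
  qed
  then show ?thesis by blast
qed

lemma proj_conv:
  assumes e: "complete_ons sm ip e"
  shows "(\<lambda>M. nrm ip (g - (\<Sum>j=1..M. sm (ip (e j) g) (e j)))) \<longlonglongrightarrow> 0"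
proof (rule LIMSEQ_I)
  fix r :: real assume r: "0 < r"
  have on: "\<forall>j\<ge>1. \<forall>k\<ge>1. ip (e j) (e k) = (if j = k then 1 else 0)"
    and dense: "ncl ip (cspan sm (e ` {1..})) = UNIV" using e unfolding complete_ons_def by auto
  have "g \<in> ncl ip (cspan sm (e ` {1..}))" using dense by simp
  then obtain y where y: "y \<in> cspan sm (e ` {1..})" and gy: "nrm ip (g - y) < r"
    using r unfolding ncl_def by blast
  obtain N d where Nd: "\<forall>M\<ge>N. y = (\<Sum>j=1..M. sm (d j) (e j))" using span_repr[OF y] by blast
  show "\<exists>no. \<forall>n\<ge>no. norm (nrm ip (g - (\<Sum>j=1..n. sm (ip (e j) g) (e j))) - 0) < r"
  proof (intro exI allI impI)
    fix M assume "N \<le> M"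
    then have yM: "y = (\<Sum>j=1..M. sm (d j) (e j))" using Nd by blast
    have onM: "\<forall>j\<in>{1..M}. \<forall>k\<in>{1..M}. ip (e j) (e k) = (if j = k then 1 else 0)" using on by auto
    have "nrm ip (g - (\<Sum>j=1..M. sm (ip (e j) g) (e j))) \<le> nrm ip (g - y)"
      unfolding yM by (rule best_approx[OF onM])
    then show "norm (nrm ip (g - (\<Sum>j=1..M. sm (ip (e j) g) (e j))) - 0) < r"
      using gy nrm_ge0 by simp
  qed
qed

end

context cip begin

lemma nrm_minus: "nrm ip (- x) = nrm ip x"
proof -
  have m: "- x = sm (-1) x" by (simp add: sm_minus_left)
  have "ip (- x) (- x) = ip x x" unfolding m by (simp add: ip_sm_left ip_sm_right)
  then show ?thesis unfolding nrm_def by simp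
qed

lemma add_op_zero: fixes A :: "'u::ab_group_add \<Rightarrow> 'w::ab_group_add"
  assumes "\<forall>x y. A (x + y) = A x + A y" shows "A 0 = 0"
proof -
  have "A (0 + 0) = A 0 + A 0" using assms by blast
  then have "A 0 + A 0 = A 0 + 0" by simp
  then show ?thesis by (rule add_left_imp_eq)
qed

lemma add_op_sum: fixes A :: "'u::ab_group_add \<Rightarrow> 'w::ab_group_add" assumes "\<forall>x y. A (x + y) = A x + A y" shows "A (sum f S) = (\<Sum>i\<in>S. A (f i))"
  by (induction S rule: infinite_finite_induct) (auto simp: assms add_op_zero[OF assms])

lemma add_op_diff: fixes A :: "'u::ab_group_add \<Rightarrow> 'w::ab_group_add" assumes "\<forall>x y. A (x + y) = A x + A y" shows "A (x - y) = A x - A y"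
proof -
  have "A (x - y + y) = A (x - y) + A y" using assms by blast
  then show ?thesis by (simp add: eq_diff_eq)
qed

lemma coef_conv:
  assumes e: "complete_ons sm ip e" and A: "bounded_op sm ip A"
  shows "(\<lambda>M. \<Sum>j=1..M. ip (e j) g * ip h (A (e j))) \<longlonglongrightarrow> ip h (A g)"
proof -
  have add: "\<forall>x y. A (x + y) = A x + A y" and hom: "\<forall>c x. A (sm c x) = sm c (A x)"
    and bd: "\<exists>C. \<forall>x. nrm ip (A x) \<le> C * nrm ip x" using A unfolding bounded_op_def by blast+
  have hom': "A (sm c x) = sm c (A x)" for c x using hom by blast
  obtain C where C: "\<forall>x. nrm ip (A x) \<le> C * nrm ip x" using bd by blast
  define P where "P M = (\<Sum>j=1..M. sm (ip (e j) g) (e j))" for M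
  have eq: "(\<Sum>j=1..M. ip (e j) g * ip h (A (e j))) = ip h (A (P M))" for M
    unfolding P_def add_op_sum[OF add] hom' ip_sum_right ip_sm_right by (rule refl)
  have bound: "norm (ip h (A (P M)) - ip h (A g)) \<le> nrm ip h * (C * nrm ip (g - P M))" for M
  proof -
    have "ip h (A (P M)) - ip h (A g) = ip h (A (P M - g))" by (simp add: ip_diff_right add_op_diff[OF add])
    then have "norm (ip h (A (P M)) - ip h (A g)) \<le> nrm ip h * nrm ip (A (P M - g))"
      using CS[of h "A (P M - g)"] by (simp only:)
    also have "\<dots> \<le> nrm ip h * (C * nrm ip (P M - g))"
      by (rule mult_left_mono[OF spec[OF C] nrm_ge0])
    also have "nrm ip (P M - g) = nrm ip (g - P M)" using nrm_minus[of "g - P M"] by simp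
    finally show ?thesis .
  qed
  have lim0: "(\<lambda>M. nrm ip h * (C * nrm ip (g - P M))) \<longlonglongrightarrow> 0"
    using proj_conv[OF e, of g] unfolding P_def
    by (intro tendsto_mult_right_zero)
  have "(\<lambda>M. ip h (A (P M)) - ip h (A g)) \<longlonglongrightarrow> 0"
    by (rule Lim_null_comparison[OF _ lim0]) (rule always_eventually, rule allI, rule bound)
  then have "(\<lambda>M. ip h (A (P M))) \<longlonglongrightarrow> ip h (A g)" by (simp add: Lim_null[symmetric])
  then show ?thesis unfolding eq .
qed

end

locale fk =
  fixes smL :: "complex \<Rightarrow> 'l::ab_group_add \<Rightarrow> 'l" and ipL :: "'l \<Rightarrow> 'l \<Rightarrow> complex"
    and cj :: "'l \<Rightarrow> 'l"
    and smF :: "complex \<Rightarrow> 'f::ab_group_add \<Rightarrow> 'f" and ipF :: "'f \<Rightarrow> 'f \<Rightarrow> complex"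
    and D :: "'f set" and a ad :: "'l \<Rightarrow> 'f \<Rightarrow> 'f" and \<Omega> :: 'f
    and A :: "'l \<Rightarrow> 'l" and e :: "nat \<Rightarrow> 'l"
  assumes L: "chilbert smL ipL"
    and cj: "conjugation smL ipL cj"
    and fock: "fock_rep smL ipL cj smF ipF D a ad \<Omega>"
    and A: "bounded_op smL ipL A"
    and e: "complete_ons smL ipL e"
begin

lemma Lcis: "cinner_space smL ipL" using L unfolding chilbert_def by (elim conjE)
lemma Fch: "chilbert smF ipF" using fock unfolding fock_rep_def by (elim conjE)
lemma Fcis: "cinner_space smF ipF" using Fch unfolding chilbert_def by (elim conjE)

sublocale LL: cip smL ipL by (rule cip.intro[OF Lcis])
sublocale FF: cip smF ipF by (rule cip.intro[OF Fcis])

lemma f_span: "cspan smF D = D" using fock unfolding fock_rep_def by (elim conjE)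
lemma f_cl: "\<forall>f. \<forall>\<Phi>\<in>D. a f \<Phi> \<in> D \<and> ad f \<Phi> \<in> D" using fock unfolding fock_rep_def by (elim conjE)
lemma f_add: "\<forall>f. \<forall>\<Phi>\<in>D. \<forall>\<Psi>\<in>D. a f (\<Phi> + \<Psi>) = a f \<Phi> + a f \<Psi> \<and> ad f (\<Phi> + \<Psi>) = ad f \<Phi> + ad f \<Psi>"
  using fock unfolding fock_rep_def by (elim conjE)
lemma f_sm: "\<forall>f c. \<forall>\<Phi>\<in>D. a f (smF c \<Phi>) = smF c (a f \<Phi>) \<and> ad f (smF c \<Phi>) = smF c (ad f \<Phi>)"
  using fock unfolding fock_rep_def by (elim conjE)
lemma f_ccr: "\<forall>f g. \<forall>\<Phi>\<in>D. a f (ad g \<Phi>) - ad g (a f \<Phi>) = smF (ipL (cj f) g) \<Phi>"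
  using fock unfolding fock_rep_def by (elim conjE)
lemma f_Om: "\<Omega> \<in> D" using fock unfolding fock_rep_def by (elim conjE)
lemma f_aOm: "\<forall>f. a f \<Omega> = 0" using fock unfolding fock_rep_def by (elim conjE)

lemma a_D: "\<Phi> \<in> D \<Longrightarrow> a f \<Phi> \<in> D" using f_cl by blast
lemma ad_D: "\<Phi> \<in> D \<Longrightarrow> ad f \<Phi> \<in> D" using f_cl by blast
lemma a_add: "\<Phi> \<in> D \<Longrightarrow> \<Psi> \<in> D \<Longrightarrow> a f (\<Phi> + \<Psi>) = a f \<Phi> + a f \<Psi>" using f_add by blast
lemma ad_add: "\<Phi> \<in> D \<Longrightarrow> \<Psi> \<in> D \<Longrightarrow> ad f (\<Phi> + \<Psi>) = ad f \<Phi> + ad f \<Psi>" using f_add by blast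
lemma a_sm: "\<Phi> \<in> D \<Longrightarrow> a f (smF c \<Phi>) = smF c (a f \<Phi>)" using f_sm by blast
lemma ad_sm: "\<Phi> \<in> D \<Longrightarrow> ad f (smF c \<Phi>) = smF c (ad f \<Phi>)" using f_sm by blast
lemma ccr: "\<Phi> \<in> D \<Longrightarrow> a f (ad g \<Phi>) = ad g (a f \<Phi>) + smF (ipL (cj f) g) \<Phi>"
proof -
  assume "\<Phi> \<in> D"
  then have "a f (ad g \<Phi>) - ad g (a f \<Phi>) = smF (ipL (cj f) g) \<Phi>" using f_ccr by blast
  then show ?thesis by (simp add: diff_eq_eq add.commute)
qed
lemma aOm: "a f \<Omega> = 0" using f_aOm by blast

lemma D_zero: "0 \<in> D"
proof -
  have "\<exists>T c. (0::'f) = (\<Sum>x\<in>T. smF (c x) x) \<and> finite T \<and> T \<subseteq> D"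
    by (rule exI[of _ "{}"]) simp
  then have "0 \<in> cspan smF D" unfolding cspan_def by blast
  then show ?thesis using f_span by simp
qed

lemma D_sm: "x \<in> D \<Longrightarrow> smF c x \<in> D"
proof -
  assume x: "x \<in> D"
  have "\<exists>T cc. smF c x = (\<Sum>y\<in>T. smF (cc y) y) \<and> finite T \<and> T \<subseteq> D"
    by (rule exI[of _ "{x}"], rule exI[of _ "\<lambda>_. c"]) (simp add: x)
  then have "smF c x \<in> cspan smF D" unfolding cspan_def by blast
  then show ?thesis using f_span by simp
qed

lemma D_add: "x \<in> D \<Longrightarrow> y \<in> D \<Longrightarrow> x + y \<in> D"
proof -
  assume x: "x \<in> D" and y: "y \<in> D"
  show ?thesis
  proof (cases "x = y")
    case True
    have "smF (1 + 1) x = x + x" by (simp only: FF.sm_add_left FF.sm_one)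
    then show ?thesis using True D_sm[OF x, of "1+1"] by simp
  next
    case False
    have "\<exists>T cc. x + y = (\<Sum>z\<in>T. smF (cc z) z) \<and> finite T \<and> T \<subseteq> D"
      by (rule exI[of _ "{x, y}"], rule exI[of _ "\<lambda>_. 1"]) (simp add: x y False)
    then have "x + y \<in> cspan smF D" unfolding cspan_def by blast
    then show ?thesis using f_span by simp
  qed
qed

lemma D_sum: "(\<And>i. i \<in> S \<Longrightarrow> \<phi> i \<in> D) \<Longrightarrow> (\<Sum>i\<in>S. smF (c i) (\<phi> i)) \<in> D"
  by (induction S rule: infinite_finite_induct) (auto simp: D_zero D_add D_sm)

lemma a_sum: "(\<And>i. i \<in> S \<Longrightarrow> \<phi> i \<in> D) \<Longrightarrow> a f (\<Sum>i\<in>S. smF (c i) (\<phi> i)) = (\<Sum>i\<in>S. smF (c i) (a f (\<phi> i)))"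
proof (induction S rule: infinite_finite_induct)
  case (infinite S) then show ?case using a_sm[OF D_zero, of f 0] by simp
next
  case empty then show ?case using a_sm[OF D_zero, of f 0] by simp
next
  case (insert x F)
  have "a f (\<Sum>i\<in>insert x F. smF (c i) (\<phi> i)) = a f (smF (c x) (\<phi> x) + (\<Sum>i\<in>F. smF (c i) (\<phi> i)))"
    using insert.hyps by simp
  also have "\<dots> = smF (c x) (a f (\<phi> x)) + a f (\<Sum>i\<in>F. smF (c i) (\<phi> i))"
    using insert.prems by (simp add: a_add D_sm D_sum a_sm)
  also have "\<dots> = (\<Sum>i\<in>insert x F. smF (c i) (a f (\<phi> i)))"
    using insert by simp
  finally show ?case .
qed

lemma ad_sum: "(\<And>i. i \<in> S \<Longrightarrow> \<phi> i \<in> D) \<Longrightarrow> ad f (\<Sum>i\<in>S. smF (c i) (\<phi> i)) = (\<Sum>i\<in>S. smF (c i) (ad f (\<phi> i)))"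
proof (induction S rule: infinite_finite_induct)
  case (infinite S) then show ?case using ad_sm[OF D_zero, of f 0] by simp
next
  case empty then show ?case using ad_sm[OF D_zero, of f 0] by simp
next
  case (insert x F)
  have "ad f (\<Sum>i\<in>insert x F. smF (c i) (\<phi> i)) = ad f (smF (c x) (\<phi> x) + (\<Sum>i\<in>F. smF (c i) (\<phi> i)))"
    using insert.hyps by simp
  also have "\<dots> = smF (c x) (ad f (\<phi> x)) + ad f (\<Sum>i\<in>F. smF (c i) (\<phi> i))"
    using insert.prems by (simp add: ad_add D_sm D_sum ad_sm)
  also have "\<dots> = (\<Sum>i\<in>insert x F. smF (c i) (ad f (\<phi> i)))"
    using insert by simp
  finally show ?case .
qed

end

lemma sl_insert_max:
  fixes I :: "nat set"
  assumes "finite I" "\<forall>i\<in>I. i < b"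
  shows "sorted_list_of_set (insert b I) = sorted_list_of_set I @ [b]"
proof -
  have bI: "b \<notin> I" using assms(2) by auto
  let ?l = "sorted_list_of_set I @ [b]"
  have "sorted_wrt (<) ?l" using assms by (simp add: sorted_wrt_append)
  moreover have "set ?l = insert b I" using assms by simp
  moreover have "length ?l = card (insert b I)" using assms bI by simp
  ultimately show ?thesis using assms(1) sorted_list_of_set_unique[of "insert b I" ?l] by simp
qed

lemma creat_insert_max:
  assumes "finite I" "\<forall>i\<in>I. i < b"
  shows "creat ad g (insert b I) \<Psi> = ad (g b) (creat ad g I \<Psi>)"
  unfolding creat_def sl_insert_max[OF assms] by simp

context fk begin

lemma foldr_D: "foldr (\<lambda>m \<Phi>. ad (g m) \<Phi>) xs \<Omega> \<in> D"
  by (induction xs) (auto simp: f_Om ad_D)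

lemma creat_D: "creat ad g I \<Omega> \<in> D"
  unfolding creat_def by (rule foldr_D)

lemma a_creat:
  assumes "finite I"
  shows "a f (creat ad g I \<Omega>) = (\<Sum>l\<in>I. smF (ipL (cj f) (g l)) (creat ad g (I - {l}) \<Omega>))"
  using assms
proof (induction I rule: finite_linorder_max_induct)
  case empty
  then show ?case by (simp add: creat_def aOm)
next
  case (insert b I)
  have bI: "b \<notin> I" using insert.hyps by auto
  have cI: "creat ad g (insert b I) \<Omega> = ad (g b) (creat ad g I \<Omega>)"
    by (rule creat_insert_max) (use insert in auto)
  have cIl: "creat ad g (insert b I - {l}) \<Omega> = ad (g b) (creat ad g (I - {l}) \<Omega>)" if "l \<in> I" for l
  proof -
    have "insert b I - {l} = insert b (I - {l})" using that bI by auto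
    then show ?thesis by (simp add: creat_insert_max insert.hyps)
  qed
  have "a f (creat ad g (insert b I) \<Omega>)
      = ad (g b) (a f (creat ad g I \<Omega>)) + smF (ipL (cj f) (g b)) (creat ad g I \<Omega>)"
    unfolding cI by (rule ccr[OF creat_D])
  also have "ad (g b) (a f (creat ad g I \<Omega>))
      = (\<Sum>l\<in>I. smF (ipL (cj f) (g l)) (ad (g b) (creat ad g (I - {l}) \<Omega>)))"
    unfolding insert.IH by (rule ad_sum[OF creat_D])
  also have "\<dots> = (\<Sum>l\<in>I. smF (ipL (cj f) (g l)) (creat ad g (insert b I - {l}) \<Omega>))"
    by (rule sum.cong) (simp_all add: cIl)
  finally show ?case using insert.hyps bI by (simp add: add.commute)
qed

end

context cip begin

lemma null_sum:
  assumes "finite P" "\<And>p. p \<in> P \<Longrightarrow> (\<lambda>M. d M p) \<longlonglongrightarrow> 0"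
  shows "(\<lambda>M. nrm ip (\<Sum>p\<in>P. sm (d M p) (\<psi> p))) \<longlonglongrightarrow> 0"
proof -
  have eq: "ip (\<Sum>p\<in>P. sm (d M p) (\<psi> p)) (\<Sum>p\<in>P. sm (d M p) (\<psi> p))
      = (\<Sum>p\<in>P. d M p * (\<Sum>q\<in>P. cnj (d M q) * ip (\<psi> q) (\<psi> p)))" for M
    by (simp add: ip_sum_sm_left ip_sum_sm_right)
  have "(\<lambda>M. \<Sum>p\<in>P. d M p * (\<Sum>q\<in>P. cnj (d M q) * ip (\<psi> q) (\<psi> p))) \<longlonglongrightarrow> (\<Sum>p\<in>P. 0 * (\<Sum>q\<in>P. cnj 0 * ip (\<psi> q) (\<psi> p)))"
    by (intro tendsto_intros assms(2)) 
  then have "(\<lambda>M. ip (\<Sum>p\<in>P. sm (d M p) (\<psi> p)) (\<Sum>p\<in>P. sm (d M p) (\<psi> p))) \<longlonglongrightarrow> 0"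
    unfolding eq by simp
  then have "(\<lambda>M. Re (ip (\<Sum>p\<in>P. sm (d M p) (\<psi> p)) (\<Sum>p\<in>P. sm (d M p) (\<psi> p)))) \<longlonglongrightarrow> Re 0"
    by (rule tendsto_Re)
  then have "(\<lambda>M. sqrt (Re (ip (\<Sum>p\<in>P. sm (d M p) (\<psi> p)) (\<Sum>p\<in>P. sm (d M p) (\<psi> p))))) \<longlonglongrightarrow> sqrt (Re 0)"
    by (rule tendsto_real_sqrt)
  then show ?thesis unfolding nrm_def by simp
qed

lemma conv_sum:
  assumes "finite P" "\<And>p. p \<in> P \<Longrightarrow> (\<lambda>M. d M p) \<longlonglongrightarrow> dl p"
  shows "conv_to ip (\<lambda>M. \<Sum>p\<in>P. sm (d M p) (\<psi> p)) (\<Sum>p\<in>P. sm (dl p) (\<psi> p))"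
proof -
  have "(\<lambda>M. nrm ip (\<Sum>p\<in>P. sm (d M p - dl p) (\<psi> p))) \<longlonglongrightarrow> 0"
  proof (rule null_sum[OF assms(1)])
    fix p assume "p \<in> P"
    then have "(\<lambda>M. d M p - dl p) \<longlonglongrightarrow> dl p - dl p" by (intro tendsto_intros assms(2))
    then show "(\<lambda>M. d M p - dl p) \<longlonglongrightarrow> 0" by simp
  qed
  then show ?thesis unfolding conv_to_def sum_sm_diff .
qed

end

context fk begin

lemma cj_cj: "cj (cj x) = x" using cj unfolding conjugation_def by blast
lemma cj_ip: "ipL (cj x) (cj y) = ipL y x" using cj unfolding conjugation_def by blast

lemma Delta_creat:
  assumes fin: "finite I"
  shows "DeltaM cj a A e M (creat ad g I \<Omega>) =
    (\<Sum>(k, l)\<in>Sigma I (\<lambda>k. I - {k}).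
       smF (\<Sum>j=1..M. ipL (e j) (g k) * ipL (cj (g l)) (A (e j))) (creat ad g (I - {k, l}) \<Omega>))"
proof -
  have cjA: "ipL (cj (A (e j))) (g l) = ipL (cj (g l)) (A (e j))" for j l
    using cj_ip[of "A (e j)" "cj (g l)"] by (simp add: cj_cj)
  have st: "I - {k} - {l} = I - {k, l}" for k l by auto
  have inner: "a (A (e j)) (a (cj (e j)) (creat ad g I \<Omega>)) =
     (\<Sum>(k, l)\<in>Sigma I (\<lambda>k. I - {k}).
       smF (ipL (e j) (g k) * ipL (cj (g l)) (A (e j))) (creat ad g (I - {k, l}) \<Omega>))" for j
  proof -
    have "a (A (e j)) (a (cj (e j)) (creat ad g I \<Omega>))
       = a (A (e j)) (\<Sum>k\<in>I. smF (ipL (e j) (g k)) (creat ad g (I - {k}) \<Omega>))"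
      unfolding a_creat[OF fin] cj_cj by (rule refl)
    also have "\<dots> = (\<Sum>k\<in>I. smF (ipL (e j) (g k)) (a (A (e j)) (creat ad g (I - {k}) \<Omega>)))"
      by (rule a_sum[OF creat_D])
    also have "\<dots> = (\<Sum>k\<in>I. smF (ipL (e j) (g k))
        (\<Sum>l\<in>I - {k}. smF (ipL (cj (g l)) (A (e j))) (creat ad g (I - {k, l}) \<Omega>)))"
      using fin by (simp add: a_creat cjA st)
    also have "\<dots> = (\<Sum>k\<in>I. \<Sum>l\<in>I - {k}. smF (ipL (e j) (g k) * ipL (cj (g l)) (A (e j))) (creat ad g (I - {k, l}) \<Omega>))"
      by (simp add: FF.sm_sum_right FF.sm_mult)
    also have "\<dots> = (\<Sum>(k, l)\<in>Sigma I (\<lambda>k. I - {k}).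
       smF (ipL (e j) (g k) * ipL (cj (g l)) (A (e j))) (creat ad g (I - {k, l}) \<Omega>))"
      using fin by (subst sum.Sigma) auto
    finally show ?thesis .
  qed
  have "DeltaM cj a A e M (creat ad g I \<Omega>) = (\<Sum>j=1..M. \<Sum>(k, l)\<in>Sigma I (\<lambda>k. I - {k}).
       smF (ipL (e j) (g k) * ipL (cj (g l)) (A (e j))) (creat ad g (I - {k, l}) \<Omega>))"
    unfolding DeltaM_def inner by (rule refl)
  also have "\<dots> = (\<Sum>(k, l)\<in>Sigma I (\<lambda>k. I - {k}). \<Sum>j=1..M.
       smF (ipL (e j) (g k) * ipL (cj (g l)) (A (e j))) (creat ad g (I - {k, l}) \<Omega>))"
    by (subst sum.swap) (simp add: case_prod_beta)
  also have "\<dots> = (\<Sum>(k, l)\<in>Sigma I (\<lambda>k. I - {k}).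
       smF (\<Sum>j=1..M. ipL (e j) (g k) * ipL (cj (g l)) (A (e j))) (creat ad g (I - {k, l}) \<Omega>))"
    by (simp add: FF.sm_sum_left case_prod_beta)
  finally show ?thesis .
qed

lemma coef_lim: "(\<lambda>M. \<Sum>j=1..M. ipL (e j) (g k) * ipL (cj (g l)) (A (e j))) \<longlonglongrightarrow> ipL (cj (g l)) (A (g k))"
  by (rule LL.coef_conv[OF e A])

end

context fk begin

lemma DeltaM_lin:
  assumes "\<And>i. i \<in> S \<Longrightarrow> \<phi> i \<in> D"
  shows "DeltaM cj a A e M (\<Sum>i\<in>S. smF (c i) (\<phi> i)) = (\<Sum>i\<in>S. smF (c i) (DeltaM cj a A e M (\<phi> i)))"
proof -
  have "DeltaM cj a A e M (\<Sum>i\<in>S. smF (c i) (\<phi> i))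
      = (\<Sum>j=1..M. \<Sum>i\<in>S. smF (c i) (a (A (e j)) (a (cj (e j)) (\<phi> i))))"
    unfolding DeltaM_def using assms by (simp add: a_sum a_D)
  also have "\<dots> = (\<Sum>i\<in>S. \<Sum>j=1..M. smF (c i) (a (A (e j)) (a (cj (e j)) (\<phi> i))))"
    by (rule sum.swap)
  also have "\<dots> = (\<Sum>i\<in>S. smF (c i) (DeltaM cj a A e M (\<phi> i)))"
    unfolding DeltaM_def by (simp add: FF.sm_sum_right)
  finally show ?thesis .
qed

abbreviation "Sg n \<equiv> Sigma {1..n} (\<lambda>k. {1..n} - {k})"

lemma part2:
  "conv_to ipF (\<lambda>M. DeltaM cj a A e M (creat ad g {1..n} \<Omega>))
     (\<Sum>(k, l)\<in>{(k, l). k \<in> {1..n} \<and> l \<in> {1..n} \<and> k \<noteq> l}.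
        smF (ipL (cj (g l)) (A (g k))) (creat ad g ({1..n} - {k, l}) \<Omega>))"
proof -
  have set: "{(k, l). k \<in> {1..n} \<and> l \<in> {1..n} \<and> k \<noteq> l} = Sg n" by auto
  have "conv_to ipF (\<lambda>M. \<Sum>p\<in>Sg n. smF ((\<lambda>(k,l). \<Sum>j=1..M. ipL (e j) (g k) * ipL (cj (g l)) (A (e j))) p)
            ((\<lambda>(k,l). creat ad g ({1..n} - {k, l}) \<Omega>) p))
          (\<Sum>p\<in>Sg n. smF ((\<lambda>(k,l). ipL (cj (g l)) (A (g k))) p) ((\<lambda>(k,l). creat ad g ({1..n} - {k, l}) \<Omega>) p))"
  proof (rule FF.conv_sum)
    show "finite (Sg n)" by simp
    fix p assume "p \<in> Sg n"
    obtain k l where p: "p = (k, l)" by (cases p)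
    show "(\<lambda>M. (\<lambda>(k,l). \<Sum>j=1..M. ipL (e j) (g k) * ipL (cj (g l)) (A (e j))) p) \<longlonglongrightarrow> (\<lambda>(k,l). ipL (cj (g l)) (A (g k))) p"
      unfolding p using coef_lim by simp
  qed
  then show ?thesis unfolding set Delta_creat[OF finite_atLeastAtMost]
    by (simp add: case_prod_beta)
qed

lemma part1:
  assumes "\<Phi> \<in> F0 smF ad \<Omega>"
  shows "\<exists>\<Psi>. conv_to ipF (\<lambda>M. DeltaM cj a A e M \<Phi>) \<Psi>"
proof -
  obtain T c where \<Phi>: "\<Phi> = (\<Sum>x\<in>T. smF (c x) x)" and T: "finite T"
      "T \<subseteq> {creat ad f {1..n} \<Omega> | n f. True}"
    using assms unfolding F0_def cspan_def by blast
  define nn where "nn x = (SOME n. \<exists>f. x = creat ad f {1..n} \<Omega>)" for x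
  define ff where "ff x = (SOME f. x = creat ad f {1..nn x} \<Omega>)" for x
  have xr: "x = creat ad (ff x) {1..nn x} \<Omega>" if "x \<in> T" for x
  proof -
    have "\<exists>n f. x = creat ad f {1..n} \<Omega>" using T(2) that by blast
    then have "\<exists>f. x = creat ad f {1..nn x} \<Omega>" unfolding nn_def by (rule someI_ex)
    then show ?thesis unfolding ff_def by (rule someI_ex)
  qed
  have xD: "x \<in> D" if "x \<in> T" for x by (subst xr[OF that]) (rule creat_D)
  define S where "S x = Sg (nn x)" for x
  define d where "d M q = (case q of (x, (k, l)) \<Rightarrow>
      c x * (\<Sum>j=1..M. ipL (e j) (ff x k) * ipL (cj (ff x l)) (A (e j))))" for M q
  define dl where "dl q = (case q of (x, (k, l)) \<Rightarrow> c x * ipL (cj (ff x l)) (A (ff x k)))" for q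
  define \<psi> where "\<psi> q = (case q of (x, (k, l)) \<Rightarrow> creat ad (ff x) ({1..nn x} - {k, l}) \<Omega>)" for q
  have eq: "DeltaM cj a A e M \<Phi> = (\<Sum>q\<in>Sigma T S. smF (d M q) (\<psi> q))" for M
  proof -
    have "DeltaM cj a A e M \<Phi> = (\<Sum>x\<in>T. smF (c x) (DeltaM cj a A e M x))"
      unfolding \<Phi> by (rule DeltaM_lin[OF xD])
    also have "\<dots> = (\<Sum>x\<in>T. \<Sum>p\<in>S x. smF (d M (x, p)) (\<psi> (x, p)))"
    proof (rule sum.cong[OF refl])
      fix x assume x: "x \<in> T"
      have "DeltaM cj a A e M x = (\<Sum>(k, l)\<in>S x.
         smF (\<Sum>j=1..M. ipL (e j) (ff x k) * ipL (cj (ff x l)) (A (e j))) (creat ad (ff x) ({1..nn x} - {k, l}) \<Omega>))"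
        unfolding S_def by (subst xr[OF x]) (rule Delta_creat, simp)
      then show "smF (c x) (DeltaM cj a A e M x) = (\<Sum>p\<in>S x. smF (d M (x, p)) (\<psi> (x, p)))"
        by (simp add: FF.sm_sum_right FF.sm_mult d_def \<psi>_def case_prod_beta)
    qed
    also have "\<dots> = (\<Sum>q\<in>Sigma T S. smF (d M q) (\<psi> q))"
      using T(1) unfolding S_def by (subst sum.Sigma) auto
    finally show ?thesis .
  qed
  have "conv_to ipF (\<lambda>M. \<Sum>q\<in>Sigma T S. smF (d M q) (\<psi> q)) (\<Sum>q\<in>Sigma T S. smF (dl q) (\<psi> q))"
  proof (rule FF.conv_sum)
    show "finite (Sigma T S)" using T(1) unfolding S_def by simp
    fix q assume "q \<in> Sigma T S"
    obtain x k l where q: "q = (x, k, l)" by (cases q) auto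
    show "(\<lambda>M. d M q) \<longlonglongrightarrow> dl q" unfolding q d_def dl_def
      unfolding prod.case by (rule tendsto_mult_left, rule coef_lim)
  qed
  then show ?thesis unfolding eq by blast
qed

end

theorem lemma5p5:
  fixes smL :: "complex \<Rightarrow> 'l::ab_group_add \<Rightarrow> 'l" and ipL :: "'l \<Rightarrow> 'l \<Rightarrow> complex"
    and cj :: "'l \<Rightarrow> 'l"
    and smF :: "complex \<Rightarrow> 'f::ab_group_add \<Rightarrow> 'f" and ipF :: "'f \<Rightarrow> 'f \<Rightarrow> complex"
    and D :: "'f set" and a ad :: "'l \<Rightarrow> 'f \<Rightarrow> 'f" and \<Omega> :: 'f
    and A :: "'l \<Rightarrow> 'l" and e :: "nat \<Rightarrow> 'l"
  assumes L: "chilbert smL ipL"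
    and cj: "conjugation smL ipL cj"
    and fock: "fock_rep smL ipL cj smF ipF D a ad \<Omega>"
    and A: "bounded_op smL ipL A"
    and e: "complete_ons smL ipL e"
  shows "(\<forall>\<Phi>\<in>F0 smF ad \<Omega>. \<exists>\<Psi>. conv_to ipF (\<lambda>M. DeltaM cj a A e M \<Phi>) \<Psi>)
    \<and> (\<forall>(n::nat) (g::nat \<Rightarrow> 'l).
         conv_to ipF (\<lambda>M. DeltaM cj a A e M (creat ad g {1..n} \<Omega>))
           (\<Sum>(k, l)\<in>{(k, l). k \<in> {1..n} \<and> l \<in> {1..n} \<and> k \<noteq> l}.
              smF (ipL (cj (g l)) (A (g k))) (creat ad g ({1..n} - {k, l}) \<Omega>)))"
proof -
  interpret fk smL ipL cj smF ipF D a ad \<Omega> A e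
    by (rule fk.intro[OF L cj fock A e])
  show ?thesis using part1 part2 by blast
qed

end
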